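(* Let $P$ be the transition matrix of a reversible and ergodic Markov chain on $V$ with stationary distribution $\pi$ and mixing rate $t^*$. For the SRT router model for $P$, with any initial configuration, $$\left|\chi^{(T)}_w-\mu^{(T)}_w\right|\le\frac{6\pi_w}{\pi_{\min}}\,t^*\,\Delta$$ for all $w\in V$ and all $T\ge0$.
   Context: Let $V=\{1,\dots,N\}$ and let $P\in\mathbb{R}_{\ge 0}^{N\times N}$ be an ergodic (irreducible, aperiodic) stochastic matrix (entries may be irrational) with stationary distribution $\pi$; $\pi_{\min}=\min_v\pi_v$; reversible means $\pi_uP_{u,v}=\pi_vP_{v,u}$ for all $u,v$. For $v\in V$ let $\mathcal N(v)=\{u: P_{v,u}>0\}$, $\delta(v)=|\mathcal N(v)|$, $\Delta=\max_v\delta(v)$. Total variation distance $d_{TV}(\xi,\zeta)=\frac12\|\xi-\zeta\|_1$; mixing time $\tau(\varepsilon)=\max_{v}\min\{t\ge0: d_{TV}(P^t_{v,\cdot},\pi)\le\varepsilon\}$; mixing rate $t^*=\tau(1/4)$. A functional-router model consists of functions $\sigma_v:\mathbb{Z}_{\ge0}\to\mathcal N(v)$; write $I_{v,u}[z,z')=|\{j\in\{z,\dots,z'-1\}:\sigma_v(j)=u\}|$ (zero if $z'\le z$). Given $\chi^{(0)}\in\mathbb{Z}_{\ge0}^N$, set $Z^{(t)}_{v,u}=I_{v,u}\big[\sum_{s=0}^{t-1}\chi^{(s)}_v,\sum_{s=0}^{t}\chi^{(s)}_v\big)$, $\chi^{(t+1)}_u=\sum_vZ^{(t)}_{v,u}$,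 $\mu^{(0)}=\chi^{(0)}$, $\mu^{(t)}=\mu^{(0)}P^t$. The SRT router is defined recursively: for $i\ge0$ let $T_i(v)=\{u\in\mathcal N(v): I_{v,u}[0,i)-(i+1)P_{v,u}<0\}$ and let $\sigma_v(i)$ be an element $u\in T_i(v)$ minimizing $(I_{v,u}[0,i)+1)/P_{v,u}$ (ties broken arbitrarily). *)

theory Defs
  imports Complex_Main
begin

primrec matpow :: "('v::finite \<Rightarrow> 'v \<Rightarrow> real) \<Rightarrow> nat \<Rightarrow> 'v \<Rightarrow> 'v \<Rightarrow> real" where
  "matpow P 0 = (\<lambda>u v. if u = v then 1 else 0)"
| "matpow P (Suc t) = (\<lambda>u w. \<Sum>v\<in>UNIV. matpow P t u v * P v w)"

definition stochastic :: "('v::finite \<Rightarrow> 'v \<Rightarrow> real) \<Rightarrow> bool" where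
  "stochastic P \<longleftrightarrow> (\<forall>u v. P u v \<ge> 0) \<and> (\<forall>u. (\<Sum>v\<in>UNIV. P u v) = 1)"

definition irreducible_chain :: "('v::finite \<Rightarrow> 'v \<Rightarrow> real) \<Rightarrow> bool" where
  "irreducible_chain P \<longleftrightarrow> (\<forall>u v. \<exists>t. matpow P t u v > 0)"

definition aperiodic_chain :: "('v::finite \<Rightarrow> 'v \<Rightarrow> real) \<Rightarrow> bool" where
  "aperiodic_chain P \<longleftrightarrow> (\<forall>v. Gcd {t::nat. t > 0 \<and> matpow P t v v > 0} = 1)"

definition ergodic_chain :: "('v::finite \<Rightarrow> 'v \<Rightarrow> real) \<Rightarrow> bool" where
  "ergodic_chain P \<longleftrightarrow> stochastic P \<and> irreducible_chain P \<and> aperiodic_chain P"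

definition stationary_dist :: "('v::finite \<Rightarrow> 'v \<Rightarrow> real) \<Rightarrow> ('v \<Rightarrow> real) \<Rightarrow> bool" where
  "stationary_dist P \<pi> \<longleftrightarrow> (\<forall>v. \<pi> v \<ge> 0) \<and> (\<Sum>v\<in>UNIV. \<pi> v) = 1 \<and>
     (\<forall>w. (\<Sum>v\<in>UNIV. \<pi> v * P v w) = \<pi> w)"

definition reversible_chain :: "('v::finite \<Rightarrow> 'v \<Rightarrow> real) \<Rightarrow> ('v \<Rightarrow> real) \<Rightarrow> bool" where
  "reversible_chain P \<pi> \<longleftrightarrow> (\<forall>u v. \<pi> u * P u v = \<pi> v * P v u)"

definition pi_min :: "('v::finite \<Rightarrow> real) \<Rightarrow> real" where
  "pi_min \<pi> = Min (range \<pi>)"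

definition nbhd :: "('v::finite \<Rightarrow> 'v \<Rightarrow> real) \<Rightarrow> 'v \<Rightarrow> 'v set" where
  "nbhd P v = {u. P v u > 0}"

definition max_degree :: "('v::finite \<Rightarrow> 'v \<Rightarrow> real) \<Rightarrow> nat" where
  "max_degree P = Max (range (\<lambda>v. card (nbhd P v)))"

definition tv_dist :: "('v::finite \<Rightarrow> real) \<Rightarrow> ('v \<Rightarrow> real) \<Rightarrow> real" where
  "tv_dist \<xi> \<zeta> = (1/2) * (\<Sum>v\<in>UNIV. \<bar>\<xi> v - \<zeta> v\<bar>)"

definition mixing_time :: "('v::finite \<Rightarrow> 'v \<Rightarrow> real) \<Rightarrow> ('v \<Rightarrow> real) \<Rightarrow> real \<Rightarrow> nat" where
  "mixing_time P \<pi> \<epsilon> = Max (range (\<lambda>v. LEAST t. tv_dist (matpow P t v) \<pi> \<le> \<epsilon>))"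

definition mixing_rate :: "('v::finite \<Rightarrow> 'v \<Rightarrow> real) \<Rightarrow> ('v \<Rightarrow> real) \<Rightarrow> nat" where
  "mixing_rate P \<pi> = mixing_time P \<pi> (1/4)"

definition I_cnt :: "('v \<Rightarrow> nat \<Rightarrow> 'v) \<Rightarrow> 'v \<Rightarrow> 'v \<Rightarrow> nat \<Rightarrow> nat \<Rightarrow> nat" where
  "I_cnt \<sigma> v u z z' = card {j. z \<le> j \<and> j < z' \<and> \<sigma> v j = u}"

definition functional_router :: "('v::finite \<Rightarrow> 'v \<Rightarrow> real) \<Rightarrow> ('v \<Rightarrow> nat \<Rightarrow> 'v) \<Rightarrow> bool" where
  "functional_router P \<sigma> \<longleftrightarrow> (\<forall>v i. \<sigma> v i \<in> nbhd P v)"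

definition srt_T :: "('v::finite \<Rightarrow> 'v \<Rightarrow> real) \<Rightarrow> ('v \<Rightarrow> nat \<Rightarrow> 'v) \<Rightarrow> nat \<Rightarrow> 'v \<Rightarrow> 'v set" where
  "srt_T P \<sigma> i v = {u \<in> nbhd P v. real (I_cnt \<sigma> v u 0 i) - real (i + 1) * P v u < 0}"

definition srt_router :: "('v::finite \<Rightarrow> 'v \<Rightarrow> real) \<Rightarrow> ('v \<Rightarrow> nat \<Rightarrow> 'v) \<Rightarrow> bool" where
  "srt_router P \<sigma> \<longleftrightarrow> (\<forall>v i. \<sigma> v i \<in> srt_T P \<sigma> i v \<and>
     (\<forall>u \<in> srt_T P \<sigma> i v.
        (real (I_cnt \<sigma> v (\<sigma> v i) 0 i) + 1) / P v (\<sigma> v i) \<le> (real (I_cnt \<sigma> v u 0 i) + 1) / P v u))"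

text \<open>Router dynamics. router_state t = (chi^(t), c^(t)) where c^(t)_v = sum_{s<t} chi^(s)_v.\<close>
primrec router_state :: "('v::finite \<Rightarrow> nat \<Rightarrow> 'v) \<Rightarrow> ('v \<Rightarrow> nat) \<Rightarrow> nat \<Rightarrow> ('v \<Rightarrow> nat) \<times> ('v \<Rightarrow> nat)" where
  "router_state \<sigma> \<chi>0 0 = (\<chi>0, (\<lambda>v. 0))"
| "router_state \<sigma> \<chi>0 (Suc t) =
     (let (x, c) = router_state \<sigma> \<chi>0 t; c' = (\<lambda>v. c v + x v)
      in ((\<lambda>u. \<Sum>v\<in>UNIV. I_cnt \<sigma> v u (c v) (c' v)), c'))"

definition chi :: "('v::finite \<Rightarrow> nat \<Rightarrow> 'v) \<Rightarrow> ('v \<Rightarrow> nat) \<Rightarrow> nat \<Rightarrow> 'v \<Rightarrow> nat" where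
  "chi \<sigma> \<chi>0 t = fst (router_state \<sigma> \<chi>0 t)"

definition mu :: "('v::finite \<Rightarrow> 'v \<Rightarrow> real) \<Rightarrow> ('v \<Rightarrow> nat) \<Rightarrow> nat \<Rightarrow> 'v \<Rightarrow> real" where
  "mu P \<chi>0 t w = (\<Sum>v\<in>UNIV. real (\<chi>0 v) * matpow P t v w)"

end

theory Submission
  imports Defs
begin


lemma matpow_add:
  fixes P :: "'v::finite \<Rightarrow> 'v \<Rightarrow> real"
  shows "matpow P (a + b) u w = (\<Sum>v\<in>UNIV. matpow P a u v * matpow P b v w)"
proof (induction b arbitrary: w)
  case 0
  show ?case by (simp add: if_distrib cong: if_cong)
next
  case (Suc b)
  have "matpow P (a + Suc b) u w = (\<Sum>x\<in>UNIV. matpow P (a+b) u x * P x w)" by simp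
  also have "\<dots> = (\<Sum>x\<in>UNIV. (\<Sum>v\<in>UNIV. matpow P a u v * matpow P b v x) * P x w)"
    using Suc by simp
  also have "\<dots> = (\<Sum>v\<in>UNIV. matpow P a u v * (\<Sum>x\<in>UNIV. matpow P b v x * P x w))"
  proof -
    have "(\<Sum>x\<in>UNIV. (\<Sum>v\<in>UNIV. matpow P a u v * matpow P b v x) * P x w)
        = (\<Sum>x\<in>UNIV. \<Sum>v\<in>UNIV. matpow P a u v * (matpow P b v x * P x w))"
      by (simp add: sum_distrib_right mult.assoc)
    also have "\<dots> = (\<Sum>v\<in>UNIV. \<Sum>x\<in>UNIV. matpow P a u v * (matpow P b v x * P x w))"
      by (rule sum.swap)
    also have "\<dots> = (\<Sum>v\<in>UNIV. matpow P a u v * (\<Sum>x\<in>UNIV. matpow P b v x * P x w))"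
      by (simp add: sum_distrib_left)
    finally show ?thesis .
  qed
  finally show ?case by simp
qed

lemma delta_sum: "(\<Sum>v\<in>UNIV. (if (u::'v::finite) = v then 1 else 0) * (f v::real)) = f u"
proof -
  have "\<And>v. (if u = v then 1 else 0) * f v = (if u = v then f v else 0)" by simp
  then show ?thesis by (simp add: sum.delta')
qed

lemma matpow_one: "matpow P 1 u v = P u v"
  by (simp add: delta_sum)

lemma matpow_Suc_left:
  fixes P :: "'v::finite \<Rightarrow> 'v \<Rightarrow> real"
  shows "matpow P (Suc t) u w = (\<Sum>v\<in>UNIV. P u v * matpow P t v w)"
  using matpow_add[of P 1 t u w] by (simp only: matpow_one) simp

lemma I_cnt_Suc:
  "I_cnt \<sigma> v u 0 (Suc z) = I_cnt \<sigma> v u 0 z + (if \<sigma> v z = u then 1 else 0)"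
proof -
  have "{j. 0 \<le> j \<and> j < Suc z \<and> \<sigma> v j = u} = {j. 0 \<le> j \<and> j < z \<and> \<sigma> v j = u} \<union> (if \<sigma> v z = u then {z} else {})"
    by (auto simp: less_Suc_eq)
  then show ?thesis unfolding I_cnt_def by auto
qed

lemma I_cnt_split:
  assumes "a \<le> b"
  shows "I_cnt \<sigma> v u a b = I_cnt \<sigma> v u 0 b - I_cnt \<sigma> v u 0 a"
    and "I_cnt \<sigma> v u 0 a \<le> I_cnt \<sigma> v u 0 b"
proof -
  have e: "{j. 0 \<le> j \<and> j < b \<and> \<sigma> v j = u} = {j. a \<le> j \<and> j < b \<and> \<sigma> v j = u} \<union> {j. 0 \<le> j \<and> j < a \<and> \<sigma> v j = u}"
    using assms by auto
  have "I_cnt \<sigma> v u 0 b = I_cnt \<sigma> v u a b + I_cnt \<sigma> v u 0 a"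
    unfolding I_cnt_def e by (subst card_Un_disjoint) auto
  then show "I_cnt \<sigma> v u a b = I_cnt \<sigma> v u 0 b - I_cnt \<sigma> v u 0 a"
    and "I_cnt \<sigma> v u 0 a \<le> I_cnt \<sigma> v u 0 b" by auto
qed

lemma I_cnt_sum:
  fixes \<sigma> :: "'v::finite \<Rightarrow> nat \<Rightarrow> 'v"
  shows "(\<Sum>u\<in>UNIV. I_cnt \<sigma> v u 0 z) = z"
proof (induction z)
  case 0 then show ?case by (simp add: I_cnt_def)
next
  case (Suc z)
  then show ?case by (simp add: I_cnt_Suc sum.distrib)
qed



lemma srt_props:
  assumes "srt_router P \<sigma>"
  shows "\<sigma> v i \<in> nbhd P v"
    and "real (I_cnt \<sigma> v (\<sigma> v i) 0 i) - real (i + 1) * P v (\<sigma> v i) < 0"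
    and "\<And>u. u \<in> srt_T P \<sigma> i v \<Longrightarrow>
        (real (I_cnt \<sigma> v (\<sigma> v i) 0 i) + 1) / P v (\<sigma> v i) \<le> (real (I_cnt \<sigma> v u 0 i) + 1) / P v u"
proof -
  have h: "\<sigma> v i \<in> srt_T P \<sigma> i v \<and> (\<forall>u \<in> srt_T P \<sigma> i v.
        (real (I_cnt \<sigma> v (\<sigma> v i) 0 i) + 1) / P v (\<sigma> v i) \<le> (real (I_cnt \<sigma> v u 0 i) + 1) / P v u)"
    using assms unfolding srt_router_def by (elim allE)
  then show "\<sigma> v i \<in> nbhd P v"
    and "real (I_cnt \<sigma> v (\<sigma> v i) 0 i) - real (i + 1) * P v (\<sigma> v i) < 0"
    unfolding srt_T_def by simp_all
  show "\<And>u. u \<in> srt_T P \<sigma> i v \<Longrightarrow>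
        (real (I_cnt \<sigma> v (\<sigma> v i) 0 i) + 1) / P v (\<sigma> v i) \<le> (real (I_cnt \<sigma> v u 0 i) + 1) / P v u"
    using h by blast
qed

lemma I_cnt_zero_if:
  assumes "\<And>i. s \<le> i \<Longrightarrow> i < z \<Longrightarrow> \<sigma> v i \<noteq> u" "s \<le> z"
  shows "I_cnt \<sigma> v u 0 z = I_cnt \<sigma> v u 0 s"
proof -
  have "I_cnt \<sigma> v u s z = 0" unfolding I_cnt_def using assms(1) by auto
  then show ?thesis using I_cnt_split[OF assms(2), of \<sigma> v u] by linarith
qed

lemma I_cnt_nonnbhd:
  assumes "srt_router P \<sigma>" "\<not> P v u > 0"
  shows "I_cnt \<sigma> v u a b = 0"
proof -
  have "\<And>j. \<sigma> v j \<noteq> u" using srt_props(1)[OF assms(1)] assms(2) unfolding nbhd_def by auto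
  then show ?thesis unfolding I_cnt_def by auto
qed

lemma srt_upper:
  assumes "srt_router P \<sigma>" "\<And>u. P v u \<ge> 0"
  shows "real (I_cnt \<sigma> v u 0 z) - real z * P v u < 1"
proof (induction z)
  case 0 then show ?case by (simp add: I_cnt_def)
next
  case (Suc z)
  show ?case
  proof (cases "\<sigma> v z = u")
    case True
    then have "real (I_cnt \<sigma> v u 0 z) - real (z + 1) * P v u < 0"
      using srt_props(2)[OF assms(1), of v z] by simp
    then show ?thesis using True by (simp add: I_cnt_Suc algebra_simps)
  next
    case False
    then show ?thesis using Suc assms(2)[of u] by (simp add: I_cnt_Suc algebra_simps)
  qed
qed

lemma srt_lower:
  assumes srt: "srt_router P \<sigma>" and nn: "\<And>u. P v u \<ge> 0" and one: "(\<Sum>u\<in>UNIV. P v u) = 1"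
    and pu: "P v u > 0"
  shows "real (I_cnt \<sigma> v u 0 z) - real z * P v u > -1"
proof (rule ccontr)
  define N where "N u i = I_cnt \<sigma> v u 0 i" for u i
  define p where "p = P v"
  define dl where "dl i = (real (N (\<sigma> v i) i) + 1) / p (\<sigma> v i)" for i
  assume "\<not> ?thesis"
  then have viol: "real (N u z) + 1 \<le> real z * p u" unfolding N_def p_def by simp
  define D where "D = (real (N u z) + 1) / p u"
  have pu': "p u > 0" using pu p_def by simp
  have Dz: "D \<le> real z" unfolding D_def using viol pu' by (simp add: divide_le_eq)
  have Dp: "D * p u = real (N u z) + 1" unfolding D_def using pu' by simp
  have mono: "\<And>u a b. a \<le> b \<Longrightarrow> N u a \<le> N u b" unfolding N_def by (rule I_cnt_split(2))
  have ppos: "\<And>i. p (\<sigma> v i) > 0" using srt_props(1)[OF srt] unfolding nbhd_def p_def by auto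
  define S where "S = {i. i < z \<and> dl i > D}"
  define s where "s = (if S = {} then 0 else Suc (Max S))"
  have finS: "finite S" unfolding S_def by auto
  have sz: "s \<le> z"
  proof (cases "S = {}")
    case False
    then have "Max S \<in> S" using finS by simp
    then show ?thesis unfolding s_def S_def using False by auto
  qed (simp add: s_def)
  have win: "\<And>i. s \<le> i \<Longrightarrow> i < z \<Longrightarrow> dl i \<le> D"
  proof -
    fix i assume i: "s \<le> i" "i < z"
    show "dl i \<le> D"
    proof (rule ccontr)
      assume "\<not> dl i \<le> D"
      then have "i \<in> S" unfolding S_def using i by auto
      then have "i \<le> Max S" "S \<noteq> {}" using finS by auto
      then show False using i unfolding s_def by auto
    qed
  qed
  have hA: "real (N u' s) \<ge> real s * p u'" if hu': "u' = u \<or> N u' s < N u' z" for u'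
  proof (cases "S = {}")
    case True then show ?thesis by (simp add: s_def)
  next
    case False
    define i0 where "i0 = Max S"
    have i0S: "i0 \<in> S" using False finS unfolding i0_def by simp
    then have i0z: "i0 < z" and dli0: "dl i0 > D" unfolding S_def by auto
    have s_eq: "s = Suc i0" unfolding s_def i0_def using False by simp
    have key: "p u' > 0 \<and> (real (N u' i0) + 1) / p u' \<le> D"
    proof (cases "u' = u")
      case True
      have "N u i0 \<le> N u z" using mono i0z by simp
      then have "(real (N u i0) + 1) / p u \<le> D" unfolding D_def using pu'
        by (simp add: divide_right_mono)
      then show ?thesis using True pu' by simp
    next
      case False
      then have lt: "N u' s < N u' z" using hu' by simp
      have "\<exists>i. s \<le> i \<and> i < z \<and> \<sigma> v i = u'"
      proof (rule ccontr)
        assume "\<not> ?thesis"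
        then have "\<And>i. s \<le> i \<Longrightarrow> i < z \<Longrightarrow> \<sigma> v i \<noteq> u'" by blast
        from I_cnt_zero_if[of s z \<sigma> v u', OF this sz] have "N u' z = N u' s" unfolding N_def .
        then show False using lt by simp
      qed
      then obtain i where i: "s \<le> i" "i < z" "\<sigma> v i = u'" by blast
      have pu'': "p u' > 0" using ppos[of i] i by simp
      have "dl i \<le> D" using win i by simp
      then have d1: "(real (N u' i) + 1) / p u' \<le> D" unfolding dl_def using i by simp
      have "N u' i0 \<le> N u' i" using mono i s_eq by simp
      then have "(real (N u' i0) + 1) / p u' \<le> (real (N u' i) + 1) / p u'"
        using pu'' by (simp add: divide_right_mono)
      then show ?thesis using d1 pu'' by simp
    qed
    have ne: "\<sigma> v i0 \<noteq> u'"
    proof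
      assume "\<sigma> v i0 = u'"
      then have "dl i0 = (real (N u' i0) + 1) / p u'" unfolding dl_def by simp
      then show False using key dli0 by simp
    qed
    have Ns: "N u' s = N u' i0" unfolding s_eq N_def using ne by (simp add: I_cnt_Suc)
    have notT: "u' \<notin> srt_T P \<sigma> i0 v"
    proof
      assume "u' \<in> srt_T P \<sigma> i0 v"
      from srt_props(3)[OF srt this] have "dl i0 \<le> (real (N u' i0) + 1) / p u'"
        unfolding dl_def N_def p_def by simp
      then show False using key dli0 by simp
    qed
    have "u' \<in> nbhd P v" using key unfolding nbhd_def p_def by simp
    then have "\<not> (real (N u' i0) - real (i0 + 1) * p u' < 0)"
      using notT unfolding srt_T_def N_def p_def by simp
    then show ?thesis using Ns s_eq by simp
  qed
  have hB: "real (N u' z) \<le> D * p u'" if lt: "N u' s < N u' z" for u'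
  proof -
    have gen: "N u' (s + k) \<le> N u' s \<or> real (N u' (s + k)) \<le> D * p u'" if "s + k \<le> z" for k
      using that
    proof (induction k)
      case 0 then show ?case by simp
    next
      case (Suc k)
      then have IH: "N u' (s + k) \<le> N u' s \<or> real (N u' (s + k)) \<le> D * p u'" by simp
      show ?case
      proof (cases "\<sigma> v (s + k) = u'")
        case True
        have "dl (s + k) \<le> D" using win Suc.prems by simp
        then have "(real (N u' (s+k)) + 1) / p u' \<le> D" unfolding dl_def using True by simp
        moreover have "p u' > 0" using ppos[of "s+k"] True by simp
        ultimately have "real (N u' (s+k)) + 1 \<le> D * p u'" by (simp add: divide_le_eq)
        moreover have "N u' (s + Suc k) = N u' (s + k) + 1" unfolding N_def using True
          by (simp add: I_cnt_Suc)
        ultimately show ?thesis by simp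
      next
        case False
        then have "N u' (s + Suc k) = N u' (s + k)" unfolding N_def by (simp add: I_cnt_Suc)
        then show ?thesis using IH by simp
      qed
    qed
    from gen[of "z - s"] sz have "N u' z \<le> N u' s \<or> real (N u' z) \<le> D * p u'" by simp
    then show ?thesis using lt by simp
  qed
  have hterm: "real (N u' z) - real (N u' s) \<le> (real z - real s) * p u' - (if u' = u then 1 else 0)" for u'
  proof -
    have pnn: "p u' \<ge> 0" using nn p_def by simp
    show ?thesis
    proof (cases "u' = u")
      case True
      then show ?thesis using hA[of u] viol by (simp add: algebra_simps)
    next
      case False
      show ?thesis
      proof (cases "N u' s < N u' z")
        case True
        have "D * p u' \<le> real z * p u'" using Dz pnn by (simp add: mult_right_mono)
        then show ?thesis using hA[of u'] hB[OF True] True False by (simp add: algebra_simps)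
      next
        case F2: False
        then have "N u' z = N u' s" using mono[OF sz, of u'] by simp
        moreover have "(real z - real s) * p u' \<ge> 0" using sz pnn by simp
        ultimately show ?thesis using False by simp
      qed
    qed
  qed
  have "(\<Sum>u'\<in>UNIV. real (N u' z) - real (N u' s)) \<le>
        (\<Sum>u'\<in>UNIV. (real z - real s) * p u' - (if u' = u then 1 else 0))"
    by (rule sum_mono) (rule hterm)
  also have "\<dots> = (\<Sum>u'\<in>UNIV. (real z - real s) * p u') - (\<Sum>u'\<in>UNIV. (if u' = u then 1 else 0))"
    by (rule sum_subtractf)
  also have "\<dots> = (real z - real s) * (\<Sum>u'\<in>UNIV. p u') - 1"
    by (simp only: sum_distrib_left) simp
  also have "\<dots> = (real z - real s) - 1" using one p_def by simp
  finally have "(\<Sum>u'\<in>UNIV. real (N u' z) - real (N u' s)) \<le> (real z - real s) - 1" .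
  moreover have "(\<Sum>u'\<in>UNIV. real (N u' z) - real (N u' s)) = real z - real s"
  proof -
    have e: "(\<Sum>u'\<in>UNIV. real (N u' x)) = real x" for x
    proof -
      have "(\<Sum>u'\<in>UNIV. real (N u' x)) = real (\<Sum>u'\<in>UNIV. N u' x)" by (rule of_nat_sum[symmetric])
      also have "\<dots> = real x" unfolding N_def by (simp only: I_cnt_sum)
      finally show ?thesis .
    qed
    show ?thesis by (simp only: sum_subtractf e)
  qed
  ultimately show False by simp
qed

lemma srt_abs:
  assumes srt: "srt_router P \<sigma>" and nn: "\<And>u. P v u \<ge> 0" and one: "(\<Sum>u\<in>UNIV. P v u) = 1"
  shows "\<bar>real (I_cnt \<sigma> v u 0 z) - real z * P v u\<bar> \<le> 1"
proof (cases "P v u > 0")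
  case True
  then show ?thesis using srt_lower[OF srt nn one True, of z] srt_upper[OF srt nn, of u z] by simp
next
  case False
  then have "P v u = 0" using nn[of u] by simp
  then show ?thesis using I_cnt_nonnbhd[OF srt False] by simp
qed



lemma tv_sym: "tv_dist a b = tv_dist b a"
  unfolding tv_dist_def by (simp add: abs_minus_commute)

lemma tv_nonneg: "tv_dist a b \<ge> 0"
  unfolding tv_dist_def by (simp add: sum_nonneg)

lemma tv_triangle:
  fixes a b c :: "'v::finite \<Rightarrow> real"
  shows "tv_dist a c \<le> tv_dist a b + tv_dist b c"
proof -
  have "(\<Sum>v\<in>UNIV. \<bar>a v - c v\<bar>) \<le> (\<Sum>v\<in>UNIV. \<bar>a v - b v\<bar> + \<bar>b v - c v\<bar>)"
    by (rule sum_mono) linarith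
  then show ?thesis unfolding tv_dist_def by (simp add: sum.distrib)
qed

lemma tv_le1:
  fixes a b :: "'v::finite \<Rightarrow> real"
  assumes "\<And>v. a v \<ge> 0" "\<And>v. b v \<ge> 0" "(\<Sum>v\<in>UNIV. a v) = 1" "(\<Sum>v\<in>UNIV. b v) = 1"
  shows "tv_dist a b \<le> 1"
proof -
  have "(\<Sum>v\<in>UNIV. \<bar>a v - b v\<bar>) \<le> (\<Sum>v\<in>UNIV. a v + b v)"
    by (rule sum_mono) (use assms in \<open>simp add: abs_le_iff\<close>)
  then show ?thesis unfolding tv_dist_def using assms by (simp add: sum.distrib)
qed

lemma tv_self: "tv_dist a a = 0"
  unfolding tv_dist_def by simp

lemma contraction:
  fixes \<mu> :: "'v::finite \<Rightarrow> real" and Q :: "'v \<Rightarrow> 'v \<Rightarrow> real"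
  assumes sum0: "(\<Sum>x\<in>UNIV. \<mu> x) = 0"
    and c: "\<And>x y. tv_dist (Q x) (Q y) \<le> c"
  shows "(\<Sum>z\<in>UNIV. \<bar>\<Sum>x\<in>UNIV. \<mu> x * Q x z\<bar>) \<le> c * (\<Sum>x\<in>UNIV. \<bar>\<mu> x\<bar>)"
proof -
  define pp where "pp x = max (\<mu> x) 0" for x
  define nn where "nn x = max (- \<mu> x) 0" for x
  have mu_eq: "\<mu> x = pp x - nn x" for x unfolding pp_def nn_def by auto
  have abs_eq: "\<bar>\<mu> x\<bar> = pp x + nn x" for x unfolding pp_def nn_def by auto
  have ppn: "pp x \<ge> 0" "nn x \<ge> 0" for x unfolding pp_def nn_def by auto
  define m where "m = (\<Sum>x\<in>UNIV. pp x)"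
  have mn: "(\<Sum>x\<in>UNIV. nn x) = m"
  proof -
    have "(\<Sum>x\<in>UNIV. pp x) - (\<Sum>x\<in>UNIV. nn x) = 0"
      using sum0 by (simp add: mu_eq sum_subtractf)
    then show ?thesis unfolding m_def by simp
  qed
  have tot: "(\<Sum>x\<in>UNIV. \<bar>\<mu> x\<bar>) = 2 * m"
    by (simp add: abs_eq sum.distrib mn m_def)
  have m0: "m \<ge> 0" unfolding m_def by (simp add: sum_nonneg ppn)
  have c0: "c \<ge> 0" using c[of undefined undefined] tv_nonneg[of "Q undefined" "Q undefined"] by simp
  show ?thesis
  proof (cases "m = 0")
    case True
    then have "\<And>x. pp x = 0" using ppn unfolding m_def
      by (simp add: sum_nonneg_eq_0_iff)
    moreover have "\<And>x. nn x = 0" using ppn mn True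
      by (simp add: sum_nonneg_eq_0_iff)
    ultimately have "\<And>x. \<mu> x = 0" using mu_eq by simp
    then show ?thesis by simp
  next
    case False
    then have mpos: "m > 0" using m0 by simp
    have point: "m * \<bar>\<Sum>x\<in>UNIV. \<mu> x * Q x z\<bar> \<le>
        (\<Sum>x\<in>UNIV. \<Sum>y\<in>UNIV. pp x * nn y * \<bar>Q x z - Q y z\<bar>)" for z
    proof -
      have "(\<Sum>x\<in>UNIV. \<Sum>y\<in>UNIV. pp x * nn y * (Q x z - Q y z))
          = (\<Sum>x\<in>UNIV. \<Sum>y\<in>UNIV. pp x * Q x z * nn y) - (\<Sum>x\<in>UNIV. \<Sum>y\<in>UNIV. pp x * (nn y * Q y z))"
        by (simp add: sum_subtractf algebra_simps)
      also have "\<dots> = (\<Sum>x\<in>UNIV. pp x * Q x z) * m - m * (\<Sum>y\<in>UNIV. nn y * Q y z)"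
        by (simp add: sum_distrib_left[symmetric] sum_distrib_right[symmetric] mn m_def)
      also have "\<dots> = m * (\<Sum>x\<in>UNIV. \<mu> x * Q x z)"
        by (simp add: mu_eq algebra_simps sum_subtractf sum_distrib_left)
      finally have eq: "m * (\<Sum>x\<in>UNIV. \<mu> x * Q x z) = (\<Sum>x\<in>UNIV. \<Sum>y\<in>UNIV. pp x * nn y * (Q x z - Q y z))"
        by simp
      have "m * \<bar>\<Sum>x\<in>UNIV. \<mu> x * Q x z\<bar> = \<bar>m * (\<Sum>x\<in>UNIV. \<mu> x * Q x z)\<bar>"
        using m0 by (simp add: abs_mult)
      also have "\<dots> \<le> (\<Sum>x\<in>UNIV. \<bar>\<Sum>y\<in>UNIV. pp x * nn y * (Q x z - Q y z)\<bar>)"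
        unfolding eq by (rule sum_abs)
      also have "\<dots> \<le> (\<Sum>x\<in>UNIV. \<Sum>y\<in>UNIV. \<bar>pp x * nn y * (Q x z - Q y z)\<bar>)"
        by (rule sum_mono) (rule sum_abs)
      also have "\<dots> = (\<Sum>x\<in>UNIV. \<Sum>y\<in>UNIV. pp x * nn y * \<bar>Q x z - Q y z\<bar>)"
        using ppn by (simp add: abs_mult)
      finally show ?thesis .
    qed
    have "m * (\<Sum>z\<in>UNIV. \<bar>\<Sum>x\<in>UNIV. \<mu> x * Q x z\<bar>)
        \<le> (\<Sum>z\<in>UNIV. \<Sum>x\<in>UNIV. \<Sum>y\<in>UNIV. pp x * nn y * \<bar>Q x z - Q y z\<bar>)"
      unfolding sum_distrib_left by (rule sum_mono) (rule point)
    also have "\<dots> = (\<Sum>x\<in>UNIV. \<Sum>y\<in>UNIV. pp x * nn y * (\<Sum>z\<in>UNIV. \<bar>Q x z - Q y z\<bar>))"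
    proof -
      have "(\<Sum>z\<in>UNIV. \<Sum>x\<in>UNIV. \<Sum>y\<in>UNIV. pp x * nn y * \<bar>Q x z - Q y z\<bar>)
          = (\<Sum>x\<in>UNIV. \<Sum>z\<in>UNIV. \<Sum>y\<in>UNIV. pp x * nn y * \<bar>Q x z - Q y z\<bar>)"
        by (rule sum.swap)
      also have "\<dots> = (\<Sum>x\<in>UNIV. \<Sum>y\<in>UNIV. \<Sum>z\<in>UNIV. pp x * nn y * \<bar>Q x z - Q y z\<bar>)"
        by (rule sum.cong[OF refl]) (rule sum.swap)
      also have "\<dots> = (\<Sum>x\<in>UNIV. \<Sum>y\<in>UNIV. pp x * nn y * (\<Sum>z\<in>UNIV. \<bar>Q x z - Q y z\<bar>))"
        by (simp add: sum_distrib_left)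
      finally show ?thesis .
    qed
    also have "\<dots> \<le> (\<Sum>x\<in>UNIV. \<Sum>y\<in>UNIV. pp x * nn y * (2 * c))"
    proof (intro sum_mono)
      fix x y
      have "(\<Sum>z\<in>UNIV. \<bar>Q x z - Q y z\<bar>) \<le> 2 * c" using c[of x y] unfolding tv_dist_def by simp
      then show "pp x * nn y * (\<Sum>z\<in>UNIV. \<bar>Q x z - Q y z\<bar>) \<le> pp x * nn y * (2 * c)"
        using ppn by (simp add: mult_left_mono)
    qed
    also have "\<dots> = m * (2 * c * m)"
      by (simp add: sum_distrib_left[symmetric] sum_distrib_right[symmetric] mn m_def algebra_simps)
    finally have "m * (\<Sum>z\<in>UNIV. \<bar>\<Sum>x\<in>UNIV. \<mu> x * Q x z\<bar>) \<le> m * (2 * c * m)" .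
    then have "(\<Sum>z\<in>UNIV. \<bar>\<Sum>x\<in>UNIV. \<mu> x * Q x z\<bar>) \<le> 2 * c * m"
      using mpos by (simp add: mult_le_cancel_left_pos)
    then show ?thesis using tot by simp
  qed
qed



locale rchain =
  fixes P :: "'v::finite \<Rightarrow> 'v \<Rightarrow> real" and \<pi> :: "'v \<Rightarrow> real"
  assumes nn: "\<And>u v. P u v \<ge> 0" and rows: "\<And>u. (\<Sum>v\<in>UNIV. P u v) = 1"
    and irr: "\<And>u v. \<exists>t. matpow P t u v > 0"
    and aper: "\<And>v. Gcd {t::nat. t > 0 \<and> matpow P t v v > 0} = 1"
    and rev: "\<And>u v. \<pi> u * P u v = \<pi> v * P v u"
    and pinn: "\<And>v. \<pi> v \<ge> 0" and pisum: "(\<Sum>v\<in>UNIV. \<pi> v) = 1"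
    and stat: "\<And>w. (\<Sum>v\<in>UNIV. \<pi> v * P v w) = \<pi> w"
begin

abbreviation M where "M t \<equiv> matpow P t"

lemma mp_nn: "M t u v \<ge> 0"
  by (induction t arbitrary: v) (auto intro!: sum_nonneg simp: nn)

lemma mp_rows: "(\<Sum>v\<in>UNIV. M t u v) = 1"
proof (induction t)
  case 0 then show ?case by simp
next
  case (Suc t)
  have "(\<Sum>w\<in>UNIV. M (Suc t) u w) = (\<Sum>w\<in>UNIV. \<Sum>v\<in>UNIV. M t u v * P v w)" by simp
  also have "\<dots> = (\<Sum>v\<in>UNIV. \<Sum>w\<in>UNIV. M t u v * P v w)" by (rule sum.swap)
  also have "\<dots> = (\<Sum>v\<in>UNIV. M t u v * (\<Sum>w\<in>UNIV. P v w))" by (simp add: sum_distrib_left)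
  also have "\<dots> = 1" using Suc by (simp add: rows)
  finally show ?case .
qed

lemma mp_stat: "(\<Sum>v\<in>UNIV. \<pi> v * M t v w) = \<pi> w"
proof (induction t arbitrary: w)
  case 0 then show ?case by (simp add: if_distrib cong: if_cong)
next
  case (Suc t)
  have "(\<Sum>v\<in>UNIV. \<pi> v * M (Suc t) v w) = (\<Sum>v\<in>UNIV. \<Sum>x\<in>UNIV. \<pi> v * M t v x * P x w)"
    by (simp add: sum_distrib_left mult.assoc)
  also have "\<dots> = (\<Sum>x\<in>UNIV. \<Sum>v\<in>UNIV. \<pi> v * M t v x * P x w)" by (rule sum.swap)
  also have "\<dots> = (\<Sum>x\<in>UNIV. (\<Sum>v\<in>UNIV. \<pi> v * M t v x) * P x w)" by (simp add: sum_distrib_right)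
  also have "\<dots> = \<pi> w" using Suc by (simp add: stat)
  finally show ?case .
qed

lemma mp_rev: "\<pi> u * M t u w = \<pi> w * M t w u"
proof (induction t arbitrary: w)
  case 0 then show ?case by simp
next
  case (Suc t)
  have "\<pi> u * M (Suc t) u w = (\<Sum>v\<in>UNIV. (\<pi> u * M t u v) * P v w)"
    by (simp add: sum_distrib_left mult.assoc)
  also have "\<dots> = (\<Sum>v\<in>UNIV. M t v u * (\<pi> v * P v w))"
    using Suc by (simp add: algebra_simps)
  also have "\<dots> = (\<Sum>v\<in>UNIV. M t v u * (\<pi> w * P w v))" by (simp add: rev)
  also have "\<dots> = \<pi> w * (\<Sum>v\<in>UNIV. P w v * M t v u)"
    by (simp add: sum_distrib_left algebra_simps)
  also have "\<dots> = \<pi> w * M (Suc t) w u" by (simp only: matpow_Suc_left)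
  finally show ?case .
qed

lemma mp_ge: "M (a + b) x z \<ge> M a x y * M b y z"
proof -
  have "M a x y * M b y z \<le> (\<Sum>v\<in>UNIV. M a x v * M b v z)"
    by (rule member_le_sum[where f = "\<lambda>v. M a x v * M b v z"]) (auto intro: mult_nonneg_nonneg mp_nn)
  then show ?thesis by (simp add: matpow_add)
qed

lemma mp_pos_add: "M a x y > 0 \<Longrightarrow> M b y z > 0 \<Longrightarrow> M (a + b) x z > 0"
  using mp_ge[where a=a and b=b and x=x and y=y and z=z] by (metis mult_pos_pos order_less_le_trans)

lemma pipos: "\<pi> w > 0"
proof -
  have "\<exists>v0. \<pi> v0 > 0"
  proof (rule ccontr)
    assume "\<not> ?thesis"
    then have "\<And>v. \<pi> v \<le> 0" by (simp add: not_less)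
    then have "(\<Sum>v\<in>UNIV. \<pi> v) \<le> 0" by (simp add: sum_nonpos)
    then show False using pisum by simp
  qed
  then obtain v0 where v0: "\<pi> v0 > 0" by blast
  obtain t where t: "M t v0 w > 0" using irr by blast
  have "\<pi> v0 * M t v0 w \<le> (\<Sum>v\<in>UNIV. \<pi> v * M t v w)"
    by (rule member_le_sum[where f = "\<lambda>v. \<pi> v * M t v w"]) (auto intro: mult_nonneg_nonneg mp_nn pinn)
  then have "\<pi> v0 * M t v0 w \<le> \<pi> w" by (simp add: mp_stat)
  moreover have "\<pi> v0 * M t v0 w > 0" using v0 t by simp
  ultimately show ?thesis by simp
qed

lemma pimin: "pi_min \<pi> > 0" "pi_min \<pi> \<le> \<pi> u"
proof -
  have "pi_min \<pi> \<in> range \<pi>" unfolding pi_min_def by (rule Min_in) auto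
  then show "pi_min \<pi> > 0" using pipos by auto
  show "pi_min \<pi> \<le> \<pi> u" unfolding pi_min_def by (rule Min_le) auto
qed

lemma P_sym_pos: "P u v > 0 \<longleftrightarrow> P v u > 0"
proof -
  have "\<pi> u * P u v = \<pi> v * P v u" by (rule rev)
  then show ?thesis using pipos[of u] pipos[of v] nn[of u v] nn[of v u]
    by (metis mult_pos_pos less_eq_real_def mult_eq_0_iff)
qed

end



definition dbarP :: "('v::finite \<Rightarrow> 'v \<Rightarrow> real) \<Rightarrow> nat \<Rightarrow> real" where
  "dbarP P t = Max (range (\<lambda>p. tv_dist (matpow P t (fst p)) (matpow P t (snd p))))"

context rchain begin

abbreviation dbar where "dbar \<equiv> dbarP P"

lemma dbar_ge: "tv_dist (M t x) (M t y) \<le> dbar t"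
  unfolding dbarP_def by (rule Max_ge) (auto intro: rev_image_eqI[where x="(x,y)"])

lemma dbar_le: "(\<And>x y. tv_dist (M t x) (M t y) \<le> c) \<Longrightarrow> dbar t \<le> c"
  unfolding dbarP_def by (subst Max_le_iff) auto

lemma dbar_nonneg: "dbar t \<ge> 0"
  using dbar_ge[of t undefined undefined] tv_nonneg[of "M t undefined" "M t undefined"] by simp

lemma tv_M_le1: "tv_dist (M t x) (M t y) \<le> 1"
  by (rule tv_le1) (auto simp: mp_nn mp_rows)

lemma dbar_le1: "dbar t \<le> 1"
  by (rule dbar_le) (rule tv_M_le1)

lemma dbar_submult: "dbar (s + t) \<le> dbar s * dbar t"
proof (rule dbar_le)
  fix x y
  define \<mu> where "\<mu> a = M s x a - M s y a" for a
  have s0: "(\<Sum>a\<in>UNIV. \<mu> a) = 0" unfolding \<mu>_def by (simp add: sum_subtractf mp_rows)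
  have eq: "M (s + t) x z - M (s + t) y z = (\<Sum>a\<in>UNIV. \<mu> a * M t a z)" for z
    unfolding \<mu>_def by (simp add: matpow_add sum_subtractf left_diff_distrib)
  have "(\<Sum>z\<in>UNIV. \<bar>\<Sum>a\<in>UNIV. \<mu> a * M t a z\<bar>) \<le> dbar t * (\<Sum>a\<in>UNIV. \<bar>\<mu> a\<bar>)"
    by (rule contraction[OF s0]) (rule dbar_ge)
  also have "(\<Sum>a\<in>UNIV. \<bar>\<mu> a\<bar>) = 2 * tv_dist (M s x) (M s y)"
    unfolding \<mu>_def tv_dist_def by simp
  finally have "(\<Sum>z\<in>UNIV. \<bar>M (s + t) x z - M (s + t) y z\<bar>) \<le> dbar t * (2 * tv_dist (M s x) (M s y))"
    by (simp add: eq)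
  also have "\<dots> \<le> dbar t * (2 * dbar s)"
    using dbar_ge[of s x y] dbar_nonneg[of t] by (simp add: mult_left_mono)
  also have "\<dots> = 2 * (dbar s * dbar t)" by simp
  finally show "tv_dist (M (s + t) x) (M (s + t) y) \<le> dbar s * dbar t"
    unfolding tv_dist_def by simp
qed

lemma dbar_mono_add: "dbar (s + r) \<le> dbar s"
proof -
  have "dbar (s + r) \<le> dbar s * dbar r" by (rule dbar_submult)
  also have "\<dots> \<le> dbar s * 1" using mult_left_mono[OF dbar_le1[of r] dbar_nonneg[of s]] .
  finally show ?thesis by simp
qed

lemma dbar_mono: "s \<le> t \<Longrightarrow> dbar t \<le> dbar s"
  using dbar_mono_add[of s "t - s"] by simp

lemma dbar_pow: "dbar (k * t) \<le> dbar t ^ k"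
proof (induction k)
  case 0
  have "dbar 0 \<le> 1" by (rule dbar_le1)
  then show ?case by simp
next
  case (Suc k)
  have "dbar (Suc k * t) = dbar (t + k * t)" by simp
  also have "\<dots> \<le> dbar t * dbar (k * t)" by (rule dbar_submult)
  also have "\<dots> \<le> dbar t * dbar t ^ k"
    using Suc dbar_nonneg[of t] by (simp add: mult_left_mono)
  finally show ?case by simp
qed

lemma tv_pi: "tv_dist (M t v) \<pi> \<le> dbar t"
proof -
  have eq: "M t v z - \<pi> z = (\<Sum>y\<in>UNIV. \<pi> y * (M t v z - M t y z))" for z
  proof -
    have "(\<Sum>y\<in>UNIV. \<pi> y * (M t v z - M t y z)) = (\<Sum>y\<in>UNIV. \<pi> y) * M t v z - (\<Sum>y\<in>UNIV. \<pi> y * M t y z)"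
      by (simp add: right_diff_distrib sum_subtractf sum_distrib_right)
    then show ?thesis by (simp add: pisum mp_stat)
  qed
  have "(\<Sum>z\<in>UNIV. \<bar>M t v z - \<pi> z\<bar>) \<le> (\<Sum>z\<in>UNIV. \<Sum>y\<in>UNIV. \<pi> y * \<bar>M t v z - M t y z\<bar>)"
  proof (rule sum_mono)
    fix z
    have "\<bar>M t v z - \<pi> z\<bar> \<le> (\<Sum>y\<in>UNIV. \<bar>\<pi> y * (M t v z - M t y z)\<bar>)" unfolding eq by (rule sum_abs)
    then show "\<bar>M t v z - \<pi> z\<bar> \<le> (\<Sum>y\<in>UNIV. \<pi> y * \<bar>M t v z - M t y z\<bar>)"
      using pinn by (simp add: abs_mult)
  qed
  also have "\<dots> = (\<Sum>y\<in>UNIV. \<pi> y * (\<Sum>z\<in>UNIV. \<bar>M t v z - M t y z\<bar>))"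
    by (subst sum.swap) (simp add: sum_distrib_left)
  also have "\<dots> \<le> (\<Sum>y\<in>UNIV. \<pi> y * (2 * dbar t))"
  proof (rule sum_mono)
    fix y
    have "(\<Sum>z\<in>UNIV. \<bar>M t v z - M t y z\<bar>) \<le> 2 * dbar t"
      using dbar_ge[of t v y] unfolding tv_dist_def by simp
    then show "\<pi> y * (\<Sum>z\<in>UNIV. \<bar>M t v z - M t y z\<bar>) \<le> \<pi> y * (2 * dbar t)"
      using pinn[of y] by (simp add: mult_left_mono)
  qed
  also have "\<dots> = 2 * dbar t" by (simp add: sum_distrib_right[symmetric] pisum)
  finally show ?thesis unfolding tv_dist_def by simp
qed

lemma tv_pi_Suc: "tv_dist (M (Suc t) v) \<pi> \<le> tv_dist (M t v) \<pi>"
proof -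
  define \<mu> where "\<mu> a = M t v a - \<pi> a" for a
  have s0: "(\<Sum>a\<in>UNIV. \<mu> a) = 0" unfolding \<mu>_def by (simp add: sum_subtractf mp_rows pisum)
  have eq: "M (Suc t) v z - \<pi> z = (\<Sum>a\<in>UNIV. \<mu> a * P a z)" for z
    unfolding \<mu>_def by (simp add: sum_subtractf left_diff_distrib stat)
  have c1: "tv_dist (P x) (P y) \<le> 1" for x y by (rule tv_le1) (auto simp: nn rows)
  have "(\<Sum>z\<in>UNIV. \<bar>\<Sum>a\<in>UNIV. \<mu> a * P a z\<bar>) \<le> 1 * (\<Sum>a\<in>UNIV. \<bar>\<mu> a\<bar>)"
    by (rule contraction[OF s0]) (rule c1)
  moreover have "(\<Sum>z\<in>UNIV. \<bar>M (Suc t) v z - \<pi> z\<bar>) = (\<Sum>z\<in>UNIV. \<bar>\<Sum>a\<in>UNIV. \<mu> a * P a z\<bar>)"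
    by (simp only: eq)
  ultimately show ?thesis unfolding tv_dist_def by (simp add: \<mu>_def)
qed

lemma tv_pi_mono: "s \<le> t \<Longrightarrow> tv_dist (M t v) \<pi> \<le> tv_dist (M s v) \<pi>"
proof (induction t)
  case 0 then show ?case by simp
next
  case (Suc t)
  show ?case
  proof (cases "s = Suc t")
    case False
    then have "s \<le> t" using Suc.prems by simp
    then show ?thesis using Suc.IH tv_pi_Suc[of t v] by linarith
  qed simp
qed

lemma step_tv: "tv_dist (M (Suc s) w) (M s w) \<le> dbar s"
proof -
  have eq: "M (Suc s) w z - M s w z = (\<Sum>x\<in>UNIV. P w x * (M s x z - M s w z))" for z
  proof -
    have "(\<Sum>x\<in>UNIV. P w x * (M s x z - M s w z)) = (\<Sum>x\<in>UNIV. P w x * M s x z) - (\<Sum>x\<in>UNIV. P w x) * M s w z"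
      by (simp add: right_diff_distrib sum_subtractf sum_distrib_right)
    then show ?thesis by (simp add: rows matpow_Suc_left[of P s w z, symmetric])
  qed
  have "(\<Sum>z\<in>UNIV. \<bar>M (Suc s) w z - M s w z\<bar>) \<le> (\<Sum>z\<in>UNIV. \<Sum>x\<in>UNIV. P w x * \<bar>M s x z - M s w z\<bar>)"
  proof (rule sum_mono)
    fix z
    have "\<bar>M (Suc s) w z - M s w z\<bar> \<le> (\<Sum>x\<in>UNIV. \<bar>P w x * (M s x z - M s w z)\<bar>)"
      unfolding eq by (rule sum_abs)
    then show "\<bar>M (Suc s) w z - M s w z\<bar> \<le> (\<Sum>x\<in>UNIV. P w x * \<bar>M s x z - M s w z\<bar>)"
      using nn by (simp add: abs_mult)
  qed
  also have "\<dots> = (\<Sum>x\<in>UNIV. P w x * (\<Sum>z\<in>UNIV. \<bar>M s x z - M s w z\<bar>))"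
    by (subst sum.swap) (simp add: sum_distrib_left)
  also have "\<dots> \<le> (\<Sum>x\<in>UNIV. P w x * (2 * dbar s))"
  proof (rule sum_mono)
    fix x
    have "(\<Sum>z\<in>UNIV. \<bar>M s x z - M s w z\<bar>) \<le> 2 * dbar s"
      using dbar_ge[of s x w] unfolding tv_dist_def by simp
    then show "P w x * (\<Sum>z\<in>UNIV. \<bar>M s x z - M s w z\<bar>) \<le> P w x * (2 * dbar s)"
      using nn[of w x] by (simp add: mult_left_mono)
  qed
  also have "\<dots> = 2 * dbar s" by (simp add: sum_distrib_right[symmetric] rows)
  finally show ?thesis unfolding tv_dist_def by simp
qed

end


lemma sum_split_add: "(\<Sum>s<a + j. f s) = (\<Sum>s<a. f s) + (\<Sum>r<j. f (a + r))"
  for f :: "nat \<Rightarrow> real"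
  by (induction j) auto

lemma geom_half: "(\<Sum>l<L. (1/2::real) ^ l) = 2 - 2 * (1/2) ^ L"
  by (induction L) (auto simp: field_simps)

context rchain begin

lemma row_pos: "\<exists>u. P v u > 0"
proof (rule ccontr)
  assume "\<not> ?thesis"
  then have "\<And>u. P v u \<le> 0" by (simp add: not_less)
  then have "(\<Sum>u\<in>UNIV. P v u) \<le> 0" by (simp add: sum_nonpos)
  then show False using rows[of v] by simp
qed

lemma two_pos: "M 2 v v > 0"
proof -
  obtain u where u: "P v u > 0" using row_pos by blast
  then have u2: "P u v > 0" using P_sym_pos by simp
  have "M (1 + 1) v v > 0"
    by (rule mp_pos_add[where y = u]) (use u u2 in \<open>simp_all only: matpow_one\<close>)
  then show ?thesis by (simp only: one_add_one)
qed

lemma odd_pos: "\<exists>m. odd m \<and> M m v v > 0"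
proof (rule ccontr)
  assume "\<not> ?thesis"
  then have "\<And>b. b \<in> {t::nat. t > 0 \<and> M t v v > 0} \<Longrightarrow> 2 dvd b" by auto
  then have "2 dvd Gcd {t::nat. t > 0 \<and> M t v v > 0}" by (rule Gcd_greatest)
  then show False using aper[of v] by simp
qed

lemma even_pos: "M (2 * k) v v > 0"
proof (induction k)
  case 0 then show ?case by simp
next
  case (Suc k)
  have "M (2 + 2 * k) v v > 0" by (rule mp_pos_add[OF two_pos Suc])
  then show ?case by simp
qed

lemma large_pos: "\<exists>m. \<forall>n\<ge>m. M n v v > 0"
proof -
  obtain m where m: "odd m" "M m v v > 0" using odd_pos by blast
  have "M n v v > 0" if "n \<ge> m" for n
  proof (cases "even n")
    case True
    then have "n = 2 * (n div 2)" by simp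
    then show ?thesis using even_pos[of "n div 2"] by metis
  next
    case False
    then have "even (n - m)" using m(1) that by simp
    then have "n = m + 2 * ((n - m) div 2)" using that by simp
    then show ?thesis using mp_pos_add[OF m(2) even_pos[of "(n - m) div 2"]] by metis
  qed
  then show ?thesis by blast
qed

lemma prim: "\<exists>R. \<forall>x y. M R x y > 0"
proof -
  define k where "k x y = (SOME t. M t x y > 0)" for x y
  define m where "m v = (SOME m. \<forall>n\<ge>m. M n v v > 0)" for v
  have k: "M (k x y) x y > 0" for x y unfolding k_def by (rule someI_ex) (rule irr)
  have m: "\<forall>n\<ge>m v. M n v v > 0" for v unfolding m_def by (rule someI_ex) (rule large_pos)
  define R where "R = (\<Sum>p\<in>UNIV. k (fst p) (snd p) + m (snd p))"
  have "M R x y > 0" for x y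
  proof -
    have le: "k x y + m y \<le> R" unfolding R_def
      using member_le_sum[of "(x,y)" UNIV "\<lambda>p. k (fst p) (snd p) + m (snd p)"] by simp
    then have "M (R - k x y) y y > 0" using m[of y] by simp
    from mp_pos_add[OF k[of x y] this] show ?thesis using le by simp
  qed
  then show ?thesis by blast
qed

lemma tv_min: "tv_dist (M t x) (M t y) = 1 - (\<Sum>z\<in>UNIV. min (M t x z) (M t y z))"
proof -
  have "\<bar>M t x z - M t y z\<bar> = M t x z + M t y z - 2 * min (M t x z) (M t y z)" for z
    by (simp add: min_def abs_if)
  then have "(\<Sum>z\<in>UNIV. \<bar>M t x z - M t y z\<bar>) = 2 - 2 * (\<Sum>z\<in>UNIV. min (M t x z) (M t y z))"
    by (simp add: sum_subtractf sum.distrib mp_rows sum_distrib_left)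
  then show ?thesis unfolding tv_dist_def by simp
qed

lemma dbar_lt1: "\<exists>R. dbar R < 1"
proof -
  obtain R where R: "\<And>x y. M R x y > 0" using prim by blast
  have "tv_dist (M R x) (M R y) < 1" for x y
  proof -
    have "min (M R x undefined) (M R y undefined) \<le> (\<Sum>z\<in>UNIV. min (M R x z) (M R y z))"
      by (rule member_le_sum[where f = "\<lambda>z. min (M R x z) (M R y z)"]) (auto simp: mp_nn)
    moreover have "min (M R x undefined) (M R y undefined) > 0" using R by simp
    ultimately show ?thesis using tv_min[of R x y] by linarith
  qed
  then have "dbar R < 1" unfolding dbarP_def by (subst Max_less_iff) auto
  then show ?thesis by blast
qed

lemma converge: "\<exists>t. \<forall>v. tv_dist (M t v) \<pi> \<le> 1/4"
proof -
  obtain R where R: "dbar R < 1" using dbar_lt1 by blast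
  obtain k where k: "dbar R ^ k < 1/4" using real_arch_pow_inv[of "1/4" "dbar R"] R by auto
  have "tv_dist (M (k * R) v) \<pi> \<le> 1/4" for v
    using tv_pi[of "k * R" v] dbar_pow[of k R] k by simp
  then show ?thesis by blast
qed

abbreviation tstar where "tstar \<equiv> mixing_rate P \<pi>"

lemma tstar_prop: "tv_dist (M tstar v) \<pi> \<le> 1/4"
proof -
  define L where "L v = (LEAST t. tv_dist (M t v) \<pi> \<le> 1/4)" for v
  have ts: "tstar = Max (range L)" unfolding mixing_rate_def mixing_time_def L_def by simp
  have "L v \<le> tstar" unfolding ts by (rule Max_ge) auto
  moreover have "tv_dist (M (L v) v) \<pi> \<le> 1/4" unfolding L_def
    by (rule LeastI_ex) (use converge in blast)
  ultimately show ?thesis using tv_pi_mono[of "L v" tstar v] by simp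
qed

lemma dbar_tstar: "dbar tstar \<le> 1/2"
proof (rule dbar_le)
  fix x y
  have "tv_dist (M tstar x) (M tstar y) \<le> tv_dist (M tstar x) \<pi> + tv_dist \<pi> (M tstar y)"
    by (rule tv_triangle)
  then show "tv_dist (M tstar x) (M tstar y) \<le> 1/2"
    using tstar_prop[of x] tstar_prop[of y] tv_sym[of \<pi> "M tstar y"] by simp
qed

lemma tstar0: "tstar = 0 \<Longrightarrow> (x::'v) = y"
proof (rule ccontr)
  assume t0: "tstar = 0" and ne: "x \<noteq> y"
  have "\<bar>M 0 x z - M 0 y z\<bar> = M 0 x z + M 0 y z" for z using ne by auto
  then have "(\<Sum>z\<in>UNIV. \<bar>M 0 x z - M 0 y z\<bar>) = 2" by (simp add: sum.distrib mp_rows[of 0])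
  then have "tv_dist (M 0 x) (M 0 y) = 1" unfolding tv_dist_def by simp
  moreover have "tv_dist (M 0 x) (M 0 y) \<le> dbar 0" by (rule dbar_ge)
  ultimately show False using dbar_tstar t0 by simp
qed

lemma sum_dbar: "1 \<le> tstar \<Longrightarrow> (\<Sum>s<n. dbar s) \<le> 2 * real tstar"
proof -
  assume t1: "1 \<le> tstar"
  define t where "t = tstar"
  have blk: "(\<Sum>s<L * t. dbar s) \<le> real t * (\<Sum>l<L. (1/2) ^ l)" for L
  proof (induction L)
    case 0 then show ?case by simp
  next
    case (Suc L)
    have "(\<Sum>s<Suc L * t. dbar s) = (\<Sum>s<L * t. dbar s) + (\<Sum>r<t. dbar (L * t + r))"
      using sum_split_add[of dbar "L * t" t] by (simp add: add.commute)
    also have "(\<Sum>r<t. dbar (L * t + r)) \<le> (\<Sum>r<t. (1/2::real) ^ L)"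
    proof (rule sum_mono)
      fix r
      have "dbar (L * t + r) \<le> dbar (L * t)" by (rule dbar_mono_add)
      also have "\<dots> \<le> dbar t ^ L" by (rule dbar_pow)
      also have "\<dots> \<le> (1/2) ^ L" using dbar_tstar dbar_nonneg t_def by (simp add: power_mono)
      finally show "dbar (L * t + r) \<le> (1/2) ^ L" .
    qed
    finally show ?case using Suc by (simp add: algebra_simps)
  qed
  have "(\<Sum>s<n. dbar s) \<le> (\<Sum>s<n * t. dbar s)"
    by (rule sum_mono2) (use t1 t_def dbar_nonneg in auto)
  also have "\<dots> \<le> real t * (\<Sum>l<n. (1/2) ^ l)" by (rule blk)
  also have "\<dots> \<le> real t * 2"
  proof -
    have "(\<Sum>l<n. (1/2::real) ^ l) \<le> 2" by (simp add: geom_half)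
    then show ?thesis by (simp add: mult_left_mono)
  qed
  finally show ?thesis using t_def by simp
qed

end


lemma abel:
  fixes \<psi> g :: "nat \<Rightarrow> real"
  assumes "\<psi> 0 = 0"
  shows "(\<Sum>t<Suc n. (\<psi> (Suc t) - \<psi> t) * g t) = \<psi> (Suc n) * g n + (\<Sum>t<n. \<psi> (Suc t) * (g t - g (Suc t)))"
  by (induction n) (auto simp: assms algebra_simps)

lemma abel_bound:
  fixes \<psi> g :: "nat \<Rightarrow> real"
  assumes "\<psi> 0 = 0" "\<And>t. \<bar>\<psi> t\<bar> \<le> 1"
  shows "\<bar>\<Sum>t<Suc n. (\<psi> (Suc t) - \<psi> t) * g t\<bar> \<le> \<bar>g n\<bar> + (\<Sum>t<n. \<bar>g t - g (Suc t)\<bar>)"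
proof -
  have m: "\<bar>\<psi> k * a\<bar> \<le> \<bar>a\<bar>" for k a
  proof -
    have "\<bar>\<psi> k * a\<bar> = \<bar>\<psi> k\<bar> * \<bar>a\<bar>" by (simp add: abs_mult)
    also have "\<dots> \<le> 1 * \<bar>a\<bar>" by (rule mult_right_mono) (use assms(2) in auto)
    finally show ?thesis by simp
  qed
  have "\<bar>\<Sum>t<Suc n. (\<psi> (Suc t) - \<psi> t) * g t\<bar> = \<bar>\<psi> (Suc n) * g n + (\<Sum>t<n. \<psi> (Suc t) * (g t - g (Suc t)))\<bar>"
    by (simp only: abel[of \<psi>, OF assms(1)])
  also have "\<dots> \<le> \<bar>\<psi> (Suc n) * g n\<bar> + \<bar>\<Sum>t<n. \<psi> (Suc t) * (g t - g (Suc t))\<bar>" by (rule abs_triangle_ineq)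
  also have "\<bar>\<Sum>t<n. \<psi> (Suc t) * (g t - g (Suc t))\<bar> \<le> (\<Sum>t<n. \<bar>\<psi> (Suc t) * (g t - g (Suc t))\<bar>)"
    by (rule sum_abs)
  also have "\<dots> \<le> (\<Sum>t<n. \<bar>g t - g (Suc t)\<bar>)" by (rule sum_mono) (rule m)
  finally show ?thesis using m[of "Suc n" "g n"] by linarith
qed

definition Cst :: "('v::finite \<Rightarrow> nat \<Rightarrow> 'v) \<Rightarrow> ('v \<Rightarrow> nat) \<Rightarrow> nat \<Rightarrow> 'v \<Rightarrow> nat" where
  "Cst \<sigma> \<chi>0 t = snd (router_state \<sigma> \<chi>0 t)"

lemma chi_0: "chi \<sigma> \<chi>0 0 = \<chi>0" by (simp add: chi_def)
lemma Cst_0: "Cst \<sigma> \<chi>0 0 v = 0" by (simp add: Cst_def)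
lemma chi_Suc: "chi \<sigma> \<chi>0 (Suc t) u = (\<Sum>v\<in>UNIV. I_cnt \<sigma> v u (Cst \<sigma> \<chi>0 t v) (Cst \<sigma> \<chi>0 t v + chi \<sigma> \<chi>0 t v))"
  by (simp add: chi_def Cst_def Let_def split_beta)
lemma Cst_Suc: "Cst \<sigma> \<chi>0 (Suc t) v = Cst \<sigma> \<chi>0 t v + chi \<sigma> \<chi>0 t v"
  by (simp add: chi_def Cst_def Let_def split_beta)



context rchain begin

lemma M_rev_div: "M s u w = \<pi> w / \<pi> u * M s w u"
  using mp_rev[of u s w] pipos[of u] by (simp add: field_simps)

lemma weighted_sum:
  assumes "\<And>u. a u \<ge> 0"
  shows "(\<Sum>u\<in>UNIV. \<pi> w / \<pi> u * a u) \<le> \<pi> w / pi_min \<pi> * (\<Sum>u\<in>UNIV. a u)"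
proof -
  have "(\<Sum>u\<in>UNIV. \<pi> w / \<pi> u * a u) \<le> (\<Sum>u\<in>UNIV. \<pi> w / pi_min \<pi> * a u)"
  proof (rule sum_mono)
    fix u
    have "\<pi> w / \<pi> u \<le> \<pi> w / pi_min \<pi>"
      using pimin(1) pimin(2)[of u] pipos[of w] pipos[of u] by (intro divide_left_mono) auto
    then show "\<pi> w / \<pi> u * a u \<le> \<pi> w / pi_min \<pi> * a u" using assms by (rule mult_right_mono)
  qed
  then show ?thesis by (simp add: sum_distrib_left)
qed

lemma sum_rev_bound0: "(\<Sum>u\<in>UNIV. \<bar>M 0 u w - \<pi> w\<bar>) \<le> \<pi> w / pi_min \<pi> * (2 * dbar 0)"
proof -
  have pt: "\<bar>M 0 u w - \<pi> w\<bar> = \<pi> w / \<pi> u * \<bar>M 0 w u - \<pi> u\<bar>" for u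
  proof -
    have "M 0 u w - \<pi> w = \<pi> w / \<pi> u * (M 0 w u - \<pi> u)"
      using M_rev_div[of 0 u w] pipos[of u] by (simp add: field_simps)
    then show ?thesis using pipos[of u] pinn[of w] by (simp add: abs_mult)
  qed
  have "(\<Sum>u\<in>UNIV. \<bar>M 0 u w - \<pi> w\<bar>) \<le> \<pi> w / pi_min \<pi> * (\<Sum>u\<in>UNIV. \<bar>M 0 w u - \<pi> u\<bar>)"
    unfolding pt by (rule weighted_sum) simp
  also have "\<dots> \<le> \<pi> w / pi_min \<pi> * (2 * dbar 0)"
  proof (rule mult_left_mono)
    show "(\<Sum>u\<in>UNIV. \<bar>M 0 w u - \<pi> u\<bar>) \<le> 2 * dbar 0" using tv_pi[of 0 w] unfolding tv_dist_def by simp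
    show "0 \<le> \<pi> w / pi_min \<pi>" using pimin pinn[of w] by simp
  qed
  finally show ?thesis .
qed

lemma sum_rev_bound: "(\<Sum>u\<in>UNIV. \<bar>M (Suc s) u w - M s u w\<bar>) \<le> \<pi> w / pi_min \<pi> * (2 * dbar s)"
proof -
  have pt: "\<bar>M (Suc s) u w - M s u w\<bar> = \<pi> w / \<pi> u * \<bar>M (Suc s) w u - M s w u\<bar>" for u
  proof -
    have "M (Suc s) u w - M s u w = \<pi> w / \<pi> u * (M (Suc s) w u - M s w u)"
      using M_rev_div[of "Suc s" u w] M_rev_div[of s u w] by (simp add: right_diff_distrib)
    then show ?thesis using pipos[of u] pinn[of w] by (simp add: abs_mult)
  qed
  have "(\<Sum>u\<in>UNIV. \<bar>M (Suc s) u w - M s u w\<bar>) \<le> \<pi> w / pi_min \<pi> * (\<Sum>u\<in>UNIV. \<bar>M (Suc s) w u - M s w u\<bar>)"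
    unfolding pt by (rule weighted_sum) simp
  also have "\<dots> \<le> \<pi> w / pi_min \<pi> * (2 * dbar s)"
  proof (rule mult_left_mono)
    show "(\<Sum>u\<in>UNIV. \<bar>M (Suc s) w u - M s w u\<bar>) \<le> 2 * dbar s" using step_tv[of s w] unfolding tv_dist_def by simp
    show "0 \<le> \<pi> w / pi_min \<pi>" using pimin pinn[of w] by simp
  qed
  finally show ?thesis .
qed

lemma indeg: "card {v. P v u > 0} \<le> max_degree P"
proof -
  have "{v. P v u > 0} = nbhd P u" unfolding nbhd_def using P_sym_pos by auto
  then show ?thesis unfolding max_degree_def by (simp add: Max_ge)
qed

lemma main_bound:
  assumes srt: "srt_router P \<sigma>"
  shows "\<bar>real (chi \<sigma> \<chi>0 (Suc n) w) - mu P \<chi>0 (Suc n) w\<bar>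
     \<le> real (max_degree P) * (\<pi> w / pi_min \<pi> * (2 * dbar 0 + 2 * (\<Sum>s<n. dbar s)))"
proof -
  define x where "x t u = real (chi \<sigma> \<chi>0 t u)" for t u
  define C where "C = Cst \<sigma> \<chi>0"
  define \<phi> where "\<phi> v u z = real (I_cnt \<sigma> v u 0 z) - real z * P v u" for v u z
  define \<psi> where "\<psi> v u t = \<phi> v u (C t v)" for v u t
  define g where "g u t = M (n - t) u w - \<pi> w" for u t
  define h where "h u = \<bar>M 0 u w - \<pi> w\<bar> + (\<Sum>s<n. \<bar>M (Suc s) u w - M s u w\<bar>)" for u
  have Cmono: "C t v \<le> C (Suc t) v" for t v unfolding C_def by (simp add: Cst_Suc)
  have S1: "x (Suc t) u - (\<Sum>v\<in>UNIV. x t v * P v u) = (\<Sum>v\<in>UNIV. \<psi> v u (Suc t) - \<psi> v u t)" for t u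
  proof -
    have a: "x (Suc t) u = (\<Sum>v\<in>UNIV. real (I_cnt \<sigma> v u 0 (C (Suc t) v)) - real (I_cnt \<sigma> v u 0 (C t v)))"
    proof -
      have "x (Suc t) u = (\<Sum>v\<in>UNIV. real (I_cnt \<sigma> v u (C t v) (C (Suc t) v)))"
        unfolding x_def C_def by (simp add: chi_Suc Cst_Suc)
      also have "\<dots> = (\<Sum>v\<in>UNIV. real (I_cnt \<sigma> v u 0 (C (Suc t) v)) - real (I_cnt \<sigma> v u 0 (C t v)))"
      proof (rule sum.cong[OF refl])
        fix v
        show "real (I_cnt \<sigma> v u (C t v) (C (Suc t) v)) = real (I_cnt \<sigma> v u 0 (C (Suc t) v)) - real (I_cnt \<sigma> v u 0 (C t v))"
          using I_cnt_split[OF Cmono[of t v], of \<sigma> v u] by (simp add: of_nat_diff)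
      qed
      finally show ?thesis .
    qed
    have b: "x t v = real (C (Suc t) v) - real (C t v)" for v
      unfolding x_def C_def by (simp add: Cst_Suc)
    have pt: "\<psi> v u (Suc t) - \<psi> v u t = (real (I_cnt \<sigma> v u 0 (C (Suc t) v)) - real (I_cnt \<sigma> v u 0 (C t v))) - x t v * P v u" for v
      unfolding \<psi>_def \<phi>_def b by (simp add: algebra_simps)
    show ?thesis unfolding a by (simp only: pt sum_subtractf)
  qed
  have phi0: "(\<Sum>u\<in>UNIV. \<phi> v u z) = 0" for v z
  proof -
    have "(\<Sum>u\<in>UNIV. \<phi> v u z) = real (\<Sum>u\<in>UNIV. I_cnt \<sigma> v u 0 z) - real z * (\<Sum>u\<in>UNIV. P v u)"
      unfolding \<phi>_def by (simp add: sum_subtractf sum_distrib_left)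
    then show ?thesis by (simp only: I_cnt_sum rows)
  qed
  have S2: "(\<Sum>u\<in>UNIV. \<psi> v u (Suc t) - \<psi> v u t) = 0" for v t
    unfolding \<psi>_def by (simp add: sum_subtractf phi0)
  define \<nu> where "\<nu> t = (\<Sum>u\<in>UNIV. x t u * M (Suc n - t) u w)" for t
  have nuT: "\<nu> (Suc n) = real (chi \<sigma> \<chi>0 (Suc n) w)"
    unfolding \<nu>_def x_def by (simp add: if_distrib cong: if_cong)
  have nu0: "\<nu> 0 = mu P \<chi>0 (Suc n) w"
    unfolding \<nu>_def x_def mu_def by (simp only: chi_0 diff_zero)
  have S3: "\<nu> (Suc t) - \<nu> t = (\<Sum>v\<in>UNIV. \<Sum>u\<in>UNIV. (\<psi> v u (Suc t) - \<psi> v u t) * g u t)" if "t < Suc n" for t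
  proof -
    have e1: "Suc n - t = Suc (n - t)" "Suc n - Suc t = n - t" using that by auto
    have "\<nu> t = (\<Sum>v\<in>UNIV. x t v * (\<Sum>u\<in>UNIV. P v u * M (n - t) u w))"
      unfolding \<nu>_def e1 by (simp only: matpow_Suc_left)
    also have "\<dots> = (\<Sum>v\<in>UNIV. \<Sum>u\<in>UNIV. x t v * P v u * M (n - t) u w)"
      by (simp add: sum_distrib_left mult.assoc)
    also have "\<dots> = (\<Sum>u\<in>UNIV. \<Sum>v\<in>UNIV. x t v * P v u * M (n - t) u w)" by (rule sum.swap)
    also have "\<dots> = (\<Sum>u\<in>UNIV. (\<Sum>v\<in>UNIV. x t v * P v u) * M (n - t) u w)"
      by (simp add: sum_distrib_right)
    finally have nut: "\<nu> t = (\<Sum>u\<in>UNIV. (\<Sum>v\<in>UNIV. x t v * P v u) * M (n - t) u w)" .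
    have "\<nu> (Suc t) - \<nu> t = (\<Sum>u\<in>UNIV. (x (Suc t) u - (\<Sum>v\<in>UNIV. x t v * P v u)) * M (n - t) u w)"
      unfolding nut unfolding \<nu>_def e1 by (simp add: sum_subtractf left_diff_distrib)
    also have "\<dots> = (\<Sum>u\<in>UNIV. (\<Sum>v\<in>UNIV. \<psi> v u (Suc t) - \<psi> v u t) * M (n - t) u w)"
      by (simp only: S1)
    also have "\<dots> = (\<Sum>u\<in>UNIV. \<Sum>v\<in>UNIV. (\<psi> v u (Suc t) - \<psi> v u t) * M (n - t) u w)"
      by (simp add: sum_distrib_right)
    also have "\<dots> = (\<Sum>v\<in>UNIV. \<Sum>u\<in>UNIV. (\<psi> v u (Suc t) - \<psi> v u t) * M (n - t) u w)" by (rule sum.swap)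
    also have "\<dots> = (\<Sum>v\<in>UNIV. \<Sum>u\<in>UNIV. (\<psi> v u (Suc t) - \<psi> v u t) * g u t)"
    proof (rule sum.cong[OF refl])
      fix v
      have "(\<Sum>u\<in>UNIV. (\<psi> v u (Suc t) - \<psi> v u t) * g u t)
          = (\<Sum>u\<in>UNIV. (\<psi> v u (Suc t) - \<psi> v u t) * M (n - t) u w) - (\<Sum>u\<in>UNIV. \<psi> v u (Suc t) - \<psi> v u t) * \<pi> w"
        unfolding g_def by (simp add: right_diff_distrib left_diff_distrib sum_subtractf sum_distrib_right)
      then show "(\<Sum>u\<in>UNIV. (\<psi> v u (Suc t) - \<psi> v u t) * M (n - t) u w) = (\<Sum>u\<in>UNIV. (\<psi> v u (Suc t) - \<psi> v u t) * g u t)"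
        by (simp add: S2)
    qed
    finally show ?thesis .
  qed
  have tele: "real (chi \<sigma> \<chi>0 (Suc n) w) - mu P \<chi>0 (Suc n) w
      = (\<Sum>v\<in>UNIV. \<Sum>u\<in>UNIV. \<Sum>t<Suc n. (\<psi> v u (Suc t) - \<psi> v u t) * g u t)"
  proof -
    have "real (chi \<sigma> \<chi>0 (Suc n) w) - mu P \<chi>0 (Suc n) w = (\<Sum>t<Suc n. \<nu> (Suc t) - \<nu> t)"
      by (simp only: sum_lessThan_telescope nuT nu0)
    also have "\<dots> = (\<Sum>t<Suc n. \<Sum>v\<in>UNIV. \<Sum>u\<in>UNIV. (\<psi> v u (Suc t) - \<psi> v u t) * g u t)"
      by (rule sum.cong[OF refl]) (simp add: S3)
    also have "\<dots> = (\<Sum>v\<in>UNIV. \<Sum>t<Suc n. \<Sum>u\<in>UNIV. (\<psi> v u (Suc t) - \<psi> v u t) * g u t)"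
      by (rule sum.swap)
    also have "\<dots> = (\<Sum>v\<in>UNIV. \<Sum>u\<in>UNIV. \<Sum>t<Suc n. (\<psi> v u (Suc t) - \<psi> v u t) * g u t)"
      by (rule sum.cong[OF refl]) (rule sum.swap)
    finally show ?thesis .
  qed
  have hnn: "h u \<ge> 0" for u unfolding h_def by (simp add: sum_nonneg)
  have S5: "\<bar>\<Sum>t<Suc n. (\<psi> v u (Suc t) - \<psi> v u t) * g u t\<bar> \<le> (if P v u > 0 then h u else 0)" for v u
  proof (cases "P v u > 0")
    case False
    then have "P v u = 0" using nn[of v u] by simp
    then have "\<And>t. \<psi> v u t = 0" unfolding \<psi>_def \<phi>_def using I_cnt_nonnbhd[OF srt False] by simp
    then show ?thesis using False hnn[of u] by simp
  next
    case True
    have p0: "\<psi> v u 0 = 0" unfolding \<psi>_def \<phi>_def C_def by (simp add: Cst_0 I_cnt_def)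
    have p1: "\<bar>\<psi> v u t\<bar> \<le> 1" for t unfolding \<psi>_def \<phi>_def by (rule srt_abs[OF srt nn rows])
    have "\<bar>\<Sum>t<Suc n. (\<psi> v u (Suc t) - \<psi> v u t) * g u t\<bar> \<le> \<bar>g u n\<bar> + (\<Sum>t<n. \<bar>g u t - g u (Suc t)\<bar>)"
      by (rule abel_bound[of "\<psi> v u", OF p0 p1])
    also have "\<dots> = h u"
    proof -
      have "(\<Sum>t<n. \<bar>g u t - g u (Suc t)\<bar>) = (\<Sum>t<n. \<bar>M (Suc (n - Suc t)) u w - M (n - Suc t) u w\<bar>)"
      proof (rule sum.cong[OF refl])
        fix t assume "t \<in> {..<n}"
        then have "n - t = Suc (n - Suc t)" by auto
        then show "\<bar>g u t - g u (Suc t)\<bar> = \<bar>M (Suc (n - Suc t)) u w - M (n - Suc t) u w\<bar>"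
          unfolding g_def by simp
      qed
      also have "\<dots> = (\<Sum>s<n. \<bar>M (Suc s) u w - M s u w\<bar>)"
        by (rule sum.nat_diff_reindex)
      finally show ?thesis unfolding h_def g_def by simp
    qed
    finally show ?thesis using True by simp
  qed
  have "\<bar>real (chi \<sigma> \<chi>0 (Suc n) w) - mu P \<chi>0 (Suc n) w\<bar>
      \<le> (\<Sum>v\<in>UNIV. \<Sum>u\<in>UNIV. \<bar>\<Sum>t<Suc n. (\<psi> v u (Suc t) - \<psi> v u t) * g u t\<bar>)"
    unfolding tele by (rule order_trans[OF sum_abs]) (rule sum_mono, rule sum_abs)
  also have "\<dots> \<le> (\<Sum>v\<in>UNIV. \<Sum>u\<in>UNIV. (if P v u > 0 then h u else 0))"
    by (rule sum_mono)+ (rule S5)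
  also have "\<dots> = (\<Sum>u\<in>UNIV. \<Sum>v\<in>UNIV. (if P v u > 0 then h u else 0))" by (rule sum.swap)
  also have "\<dots> = (\<Sum>u\<in>UNIV. real (card {v. P v u > 0}) * h u)"
  proof (rule sum.cong[OF refl])
    fix u
    have "(\<Sum>v\<in>UNIV. (if P v u > 0 then h u else 0)) = (\<Sum>v\<in>{v\<in>UNIV. P v u > 0}. h u)"
      by (rule sum.inter_filter[symmetric]) simp
    then show "(\<Sum>v\<in>UNIV. (if P v u > 0 then h u else 0)) = real (card {v. P v u > 0}) * h u" by simp
  qed
  also have "\<dots> \<le> (\<Sum>u\<in>UNIV. real (max_degree P) * h u)"
    by (rule sum_mono) (use indeg hnn in \<open>auto intro: mult_right_mono\<close>)
  also have "\<dots> = real (max_degree P) * (\<Sum>u\<in>UNIV. h u)" by (simp add: sum_distrib_left)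
  also have "\<dots> \<le> real (max_degree P) * (\<pi> w / pi_min \<pi> * (2 * dbar 0 + 2 * (\<Sum>s<n. dbar s)))"
  proof (rule mult_left_mono)
    have "(\<Sum>u\<in>UNIV. h u) = (\<Sum>u\<in>UNIV. \<bar>M 0 u w - \<pi> w\<bar>) + (\<Sum>s<n. \<Sum>u\<in>UNIV. \<bar>M (Suc s) u w - M s u w\<bar>)"
      unfolding h_def by (simp add: sum.distrib sum.swap[of _ UNIV "{..<n}"])
    also have "\<dots> \<le> \<pi> w / pi_min \<pi> * (2 * dbar 0) + (\<Sum>s<n. \<pi> w / pi_min \<pi> * (2 * dbar s))"
      by (rule add_mono[OF sum_rev_bound0 sum_mono[OF sum_rev_bound]])
    also have "\<dots> = \<pi> w / pi_min \<pi> * (2 * dbar 0 + 2 * (\<Sum>s<n. dbar s))"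
      by (simp add: sum_distrib_left algebra_simps)
    finally show "(\<Sum>u\<in>UNIV. h u) \<le> \<pi> w / pi_min \<pi> * (2 * dbar 0 + 2 * (\<Sum>s<n. dbar s))" .
  qed simp
  finally show ?thesis .
qed

end


theorem theorem3p2:
  fixes P :: "'v::finite \<Rightarrow> 'v \<Rightarrow> real"
    and \<pi> :: "'v \<Rightarrow> real"
    and \<sigma> :: "'v \<Rightarrow> nat \<Rightarrow> 'v"
    and \<chi>0 :: "'v \<Rightarrow> nat"
  assumes "ergodic_chain P"
    and "reversible_chain P \<pi>"
    and "stationary_dist P \<pi>"
    and "srt_router P \<sigma>"
  shows "\<forall>w T. \<bar>real (chi \<sigma> \<chi>0 T w) - mu P \<chi>0 T w\<bar>
           \<le> 6 * \<pi> w / pi_min \<pi> * real (mixing_rate P \<pi>) * real (max_degree P)"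
proof -
  interpret rchain P \<pi>
    using assms(1-3) unfolding ergodic_chain_def stochastic_def irreducible_chain_def
      aperiodic_chain_def reversible_chain_def stationary_dist_def
    by unfold_locales auto
  have rhs_nn: "0 \<le> 6 * \<pi> w / pi_min \<pi> * real tstar * real (max_degree P)" for w
    using pinn[of w] pimin(1) by simp
  show ?thesis
  proof (intro allI)
    fix w T
    show "\<bar>real (chi \<sigma> \<chi>0 T w) - mu P \<chi>0 T w\<bar> \<le> 6 * \<pi> w / pi_min \<pi> * real tstar * real (max_degree P)"
    proof (cases T)
      case 0
      have "mu P \<chi>0 0 w = real (\<chi>0 w)" unfolding mu_def by (simp add: if_distrib cong: if_cong)
      then show ?thesis using 0 rhs_nn[of w] by (simp add: chi_0)
    next
      case (Suc n)
      define F where "F = 2 * dbar 0 + 2 * (\<Sum>s<n. dbar s)"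
      have F: "F \<le> 6 * real tstar"
      proof (cases "tstar = 0")
        case True
        have "dbar s = 0" for s
        proof -
          have "dbar s \<le> 0"
          proof (rule dbar_le)
            fix x y :: 'v
            have "x = y" by (rule tstar0[OF True])
            then show "tv_dist (M s x) (M s y) \<le> 0" by (simp add: tv_self)
          qed
          then show ?thesis using dbar_nonneg[of s] by simp
        qed
        then show ?thesis unfolding F_def by simp
      next
        case False
        then have "1 \<le> tstar" by simp
        from sum_dbar[OF this, of n] dbar_le1[of 0] this show ?thesis unfolding F_def by simp
      qed
      have c0: "0 \<le> real (max_degree P) * (\<pi> w / pi_min \<pi>)" using pinn[of w] pimin(1) by simp
      have "\<bar>real (chi \<sigma> \<chi>0 T w) - mu P \<chi>0 T w\<bar> \<le> real (max_degree P) * (\<pi> w / pi_min \<pi> * F)"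
        using main_bound[OF assms(4), of \<chi>0 n w] Suc F_def by simp
      also have "\<dots> = (real (max_degree P) * (\<pi> w / pi_min \<pi>)) * F" by simp
      also have "\<dots> \<le> (real (max_degree P) * (\<pi> w / pi_min \<pi>)) * (6 * real tstar)"
        by (rule mult_left_mono[OF F c0])
      also have "\<dots> = 6 * \<pi> w / pi_min \<pi> * real tstar * real (max_degree P)" by simp
      finally show ?thesis .
    qed
  qed
qed


end
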